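(* Let $n,j,k,s\geq 1$. If $\mathsf{RT}^n_k\leq_{\mathrm{sW}}\mathsf{RT}^n_j$, then $\mathsf{RT}^n_{k^s}\leq_{\mathrm{sW}}\mathsf{RT}^n_{j^s}$.
   Context: For $n,k\geq1$, $\mathsf{RT}^n_k$ is the problem whose instances are colorings $f:[\omega]^n\to k$ and whose solutions are infinite sets $H$ with $f$ constant on $[H]^n$. $\mathsf{P}\leq_{\mathrm{sW}}\mathsf{Q}$ means there are Turing functionals $\Phi,\Psi$ such that for every instance $A$ of $\mathsf{P}$, $\Phi(A)$ is an instance of $\mathsf{Q}$, and for every solution $T$ to $\Phi(A)$, $\Psi(T)$ is a solution to $A$. *)

theory Defs
  imports Main "HOL-Library.Nat_Bijection"
begin

datatype rf = Zero | Succ | Proj nat | Orc | Comp rf "rf list" | Prim rf rf | Mn rf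

inductive eval :: "(nat \<Rightarrow> nat) \<Rightarrow> rf \<Rightarrow> nat list \<Rightarrow> nat \<Rightarrow> bool" for A where
  ev_zero: "eval A Zero xs 0"
| ev_succ: "eval A Succ (x # xs) (Suc x)"
| ev_proj: "i < length xs \<Longrightarrow> eval A (Proj i) xs (xs ! i)"
| ev_orc: "eval A Orc (x # xs) (A x)"
| ev_comp: "list_all2 (\<lambda>g v. eval A g xs v) gs vs \<Longrightarrow> eval A f vs y \<Longrightarrow> eval A (Comp f gs) xs y"
| ev_prim0: "eval A f xs y \<Longrightarrow> eval A (Prim f g) (0 # xs) y"
| ev_primS: "eval A (Prim f g) (m # xs) z \<Longrightarrow> eval A g (z # m # xs) y
             \<Longrightarrow> eval A (Prim f g) (Suc m # xs) y"
| ev_mn: "eval A f (y # xs) 0 \<Longrightarrow> (\<forall>z<y. \<exists>v. v > 0 \<and> eval A f (z # xs) v)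
          \<Longrightarrow> eval A (Mn f) xs y"

definition computes :: "rf \<Rightarrow> (nat \<Rightarrow> nat) \<Rightarrow> (nat \<Rightarrow> nat) \<Rightarrow> bool" where
  "computes e A B \<longleftrightarrow> (\<forall>x. eval A e [x] (B x))"

type_synonym problem = "((nat \<Rightarrow> nat) \<Rightarrow> bool) \<times> ((nat \<Rightarrow> nat) \<Rightarrow> (nat \<Rightarrow> nat) \<Rightarrow> bool)"

definition sW_le :: "problem \<Rightarrow> problem \<Rightarrow> bool" where
  "sW_le P Q \<longleftrightarrow> (\<exists>\<Phi> \<Psi>. \<forall>A. fst P A \<longrightarrow>
      (\<exists>B. computes \<Phi> A B \<and> fst Q B \<and>
         (\<forall>T. snd Q B T \<longrightarrow> (\<exists>C. computes \<Psi> T C \<and> snd P A C))))"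

text \<open>A colouring f : [omega]^n -> k is coded by c :: nat => nat with
  f(F) = c (set_encode F) for every F with card F = n, c(set_encode F) < k,
  and c m = 0 when m does not code an n-element set (canonical coding).\<close>
definition RT_inst :: "nat \<Rightarrow> nat \<Rightarrow> (nat \<Rightarrow> nat) \<Rightarrow> bool" where
  "RT_inst n k c \<longleftrightarrow>
     (\<forall>F. finite F \<and> card F = n \<longrightarrow> c (set_encode F) < k) \<and>
     (\<forall>m. card (set_decode m) \<noteq> n \<longrightarrow> c m = 0)"

definition char_set :: "(nat \<Rightarrow> nat) \<Rightarrow> nat set" where
  "char_set h = {x. h x = 1}"

definition RT_sol :: "nat \<Rightarrow> (nat \<Rightarrow> nat) \<Rightarrow> (nat \<Rightarrow> nat) \<Rightarrow> bool" where
  "RT_sol n c h \<longleftrightarrow> (\<forall>x. h x \<le> 1) \<and> infinite (char_set h) \<and>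
     (\<exists>i. \<forall>F. F \<subseteq> char_set h \<and> finite F \<and> card F = n \<longrightarrow> c (set_encode F) = i)"

definition RT :: "nat \<Rightarrow> nat \<Rightarrow> problem" where
  "RT n k = (RT_inst n k, RT_sol n)"

end

theory Submission imports Defs begin

lemma projE: "i < length xs \<Longrightarrow> xs ! i = y \<Longrightarrow> eval A (Proj i) xs y"
  using ev_proj by blast

lemma comp1: "eval A g xs v \<Longrightarrow> eval A f [v] y \<Longrightarrow> eval A (Comp f [g]) xs y"
  by (rule ev_comp[where vs="[v]"]) auto

lemma comp2: "eval A g1 xs va \<Longrightarrow> eval A g2 xs vb \<Longrightarrow> eval A f [va,vb] y \<Longrightarrow> eval A (Comp f [g1,g2]) xs y"
  by (rule ev_comp[where vs="[va,vb]"]) auto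

lemma eval_eq: "eval A f xs y \<Longrightarrow> y = y' \<Longrightarrow> eval A f xs y'" by simp

fun constp :: "nat \<Rightarrow> rf" where
  "constp 0 = Zero" | "constp (Suc c) = Comp Succ [constp c]"

lemma ev_const: "eval A (constp c) xs c"
  by (induction c) (auto intro: comp1 ev_zero ev_succ)

definition "addp = Prim (Proj 0) (Comp Succ [Proj 0])"

lemma ev_add: "eval A addp (m # x # xs) (m + x)"
proof (induction m)
  case 0 show ?case unfolding addp_def by (rule ev_prim0, rule projE) auto
next
  case (Suc m)
  show ?case unfolding addp_def
    by (rule ev_primS[OF Suc[unfolded addp_def]], rule comp1, rule projE, auto intro: ev_succ)
qed

definition "mulp = Prim Zero (Comp addp [Proj 0, Proj 2])"

lemma ev_mul: "eval A mulp (m # x # xs) (m * x)"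
proof (induction m)
  case 0 show ?case unfolding mulp_def by (rule eval_eq, rule ev_prim0, rule ev_zero) auto
next
  case (Suc m)
  show ?case unfolding mulp_def
    by (rule ev_primS[OF Suc[unfolded mulp_def]], rule comp2, (rule projE, auto)[1], (rule projE, auto)[1],
        rule eval_eq, rule ev_add, simp)
qed

definition "predp = Prim Zero (Proj 1)"

lemma ev_pred: "eval A predp (m # xs) (m - 1)"
proof (induction m)
  case 0 then show ?case unfolding predp_def by (auto intro: ev_prim0 ev_zero)
next
  case (Suc m)
  show ?case unfolding predp_def by (rule eval_eq[OF ev_primS[OF Suc[unfolded predp_def] projE]]) auto
qed

definition "subp = Prim (Proj 0) (Comp predp [Proj 0])"

lemma ev_sub: "eval A subp (m # x # xs) (x - m)"
proof (induction m)
  case 0 show ?case unfolding subp_def by (rule eval_eq, rule ev_prim0, rule projE) auto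
next
  case (Suc m)
  show ?case unfolding subp_def
    by (rule ev_primS[OF Suc[unfolded subp_def]], rule comp1, (rule projE, auto)[1],
        rule eval_eq, rule ev_pred, simp)
qed

definition eqp :: "nat \<Rightarrow> rf" where
  "eqp c = Comp subp [Comp addp [Comp subp [Proj 0, constp c], Comp subp [constp c, Proj 0]], constp 1]"

lemma ev_eqp: "eval A (eqp c) (y # xs) (if y = c then 1 else 0)"
  unfolding eqp_def
  apply (rule comp2[where va="(c - y) + (y - c)" and vb=1])
    apply (rule comp2[where va="c - y" and vb="y - c"])
      apply (rule comp2[where va=y and vb=c], (rule projE; simp), rule ev_const, rule ev_sub)
     apply (rule comp2[where va=c and vb=y], rule ev_const, (rule projE; simp), rule ev_sub)
    apply (rule ev_add)
   apply (rule ev_const)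
  apply (rule eval_eq, rule ev_sub, simp)
  done

fun tab :: "(nat \<Rightarrow> nat) \<Rightarrow> nat \<Rightarrow> rf" where
  "tab h 0 = Zero"
| "tab h (Suc c) = Comp addp [tab h c, Comp mulp [eqp c, constp (h c)]]"

lemma ev_tab: "eval A (tab h N) (y # xs) (\<Sum>c<N. if y = c then h c else 0)"
proof (induction N)
  case 0 then show ?case by (auto intro: ev_zero)
next
  case (Suc N)
  show ?case
    apply (simp only: tab.simps)
    apply (rule comp2[OF Suc])
     apply (rule comp2[OF ev_eqp ev_const])
     apply (rule ev_mul)
    apply (rule eval_eq, rule ev_add, simp)
    done
qed

lemma sum_delta_nat: "(\<Sum>c<(N::nat). if y = c then h c else 0) = (if y < N then h y else (0::nat))"
  proof (induction N)
  case (Suc N) then show ?case by auto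
qed simp

definition Gp :: "(nat \<Rightarrow> nat) \<Rightarrow> nat \<Rightarrow> rf" where
  "Gp h N = Comp (tab h N) [Orc]"

lemma ev_Gp: "eval A (Gp h N) (x # xs) (if A x < N then h (A x) else 0)"
  unfolding Gp_def by (rule comp1, rule ev_orc, rule eval_eq, rule ev_tab, simp add: sum_delta_nat)

primrec sbs :: "rf \<Rightarrow> rf \<Rightarrow> rf" where
  "sbs G Zero = Zero" | "sbs G Succ = Succ" | "sbs G (Proj i) = Proj i" | "sbs G Orc = G"
| "sbs G (Comp f gs) = Comp (sbs G f) (map (sbs G) gs)"
| "sbs G (Prim f g) = Prim (sbs G f) (sbs G g)" | "sbs G (Mn f) = Mn (sbs G f)"

lemma ev_sbs:
  assumes G: "\<And>x xs. eval A G (x # xs) (B x)"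
  shows "eval B e xs y \<Longrightarrow> eval A (sbs G e) xs y"
proof (induction rule: eval.induct)
  case (ev_zero xs) show ?case by (simp add: eval.ev_zero)
next
  case (ev_succ x xs) show ?case by (simp add: eval.ev_succ)
next
  case (ev_proj i xs) then show ?case by (simp add: eval.ev_proj)
next
  case (ev_orc x xs) show ?case by (simp add: G)
next
  case (ev_comp xs gs vs f y)
  have "list_all2 (\<lambda>g v. eval A g xs v) (map (sbs G) gs) vs"
    using ev_comp(1) unfolding list_all2_map1 by (rule list_all2_mono) simp
  then have "eval A (Comp (sbs G f) (map (sbs G) gs)) xs y" by (rule eval.ev_comp) (rule ev_comp.IH(2))
  then show ?case by simp
next
  case (ev_prim0 f xs y) then show ?case by (simp add: eval.ev_prim0)
next
  case (ev_primS f g m xs z y) then show ?case by (simp add: eval.ev_primS)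
next
  case (ev_mn f y xs) then show ?case by (simp, intro eval.ev_mn) blast+
qed

lemma la2_det: "list_all2 (\<lambda>g v. P g v \<and> (\<forall>v'. Q g v' \<longrightarrow> v = v')) gs vs \<Longrightarrow> list_all2 Q gs ws \<Longrightarrow> vs = ws"
proof (induction arbitrary: ws rule: list_all2_induct)
  case Nil then show ?case by simp
next
  case (Cons x xs y ys)
  then show ?case by (cases ws) auto
qed

inductive_cases zeroE: "eval A Zero xs y"
inductive_cases succE: "eval A Succ xs y"
inductive_cases projEl: "eval A (Proj i) xs y"
inductive_cases orcE: "eval A Orc xs y"
inductive_cases compE: "eval A (Comp f gs) xs y"
inductive_cases primE: "eval A (Prim f g) xs y"
inductive_cases mnE: "eval A (Mn f) xs y"

lemma mn_inv: "eval A (Mn f) xs y \<Longrightarrow> eval A f (y # xs) 0 \<and> (\<forall>z<y. \<exists>v>0. eval A f (z # xs) v)"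
  by (erule eval.cases) simp_all

lemma eval_det: "eval A e xs y \<Longrightarrow> eval A e xs y' \<Longrightarrow> y = y'"
proof (induction arbitrary: y' rule: eval.induct)
  case (ev_comp xs gs vs f y)
  from ev_comp.prems obtain ws where ws: "list_all2 (\<lambda>g v. eval A g xs v) gs ws" "eval A f ws y'"
    by (cases rule: compE) blast
  have "vs = ws" by (rule la2_det[OF ev_comp.IH(1) ws(1)])
  then show ?case using ev_comp.IH(2) ws(2) by simp
next
  case (ev_prim0 f xs y)
  from ev_prim0.prems have "eval A f xs y'" by (cases rule: eval.cases) auto
  then show ?case by (rule ev_prim0.IH)
next
  case (ev_primS f g m xs z y)
  from ev_primS.prems obtain z' where z': "eval A (Prim f g) (m # xs) z'" "eval A g (z' # m # xs) y'"
    by (cases rule: eval.cases) auto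
  have "z = z'" by (rule ev_primS.IH(1)[OF z'(1)])
  then show ?case using ev_primS.IH(2) z'(2) by simp
next
  case (ev_mn f y xs)
  from ev_mn.prems have a: "eval A f (y' # xs) 0" "\<forall>z<y'. \<exists>v>0. eval A f (z # xs) v"
    using mn_inv by blast+
  show ?case
  proof (rule ccontr)
    assume "y \<noteq> y'"
    then consider "y < y'" | "y' < y" by linarith
    then show False
    proof cases
      case 1 with a obtain v where v: "v > 0" "eval A f (y # xs) v" by blast
      have "0 = v" by (rule ev_mn.IH(1)[OF v(2)])
      with v(1) show False by simp
    next
      case 2 with ev_mn.IH(2) a(1) show False by force
    qed
  qed
next
  case (ev_zero xs) show ?case using ev_zero.prems by (cases rule: eval.cases) auto
next
  case (ev_succ x xs) show ?case using ev_succ.prems by (cases rule: eval.cases) auto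
next
  case (ev_proj i xs) show ?case using ev_proj.prems by (cases rule: eval.cases) auto
next
  case (ev_orc x xs) show ?case using ev_orc.prems by (cases rule: eval.cases) auto
qed

lemma computes_det: "computes e A B \<Longrightarrow> computes e A B' \<Longrightarrow> B = B'"
  unfolding computes_def using eval_det by blast

fun hv :: "nat \<Rightarrow> (nat \<Rightarrow> nat) \<Rightarrow> nat \<Rightarrow> nat \<Rightarrow> nat" where
  "hv j b l 0 = 0" | "hv j b l (Suc s) = b l + j * hv j b (Suc l) s"

lemma hv_zero: "hv j (\<lambda>l. 0) l s = 0"
  by (induction s arbitrary: l) simp_all

lemma hv_cong: "(\<forall>m. l \<le> m \<and> m < l + s \<longrightarrow> b m = b' m) \<Longrightarrow> hv j b l s = hv j b' l s"
proof (induction s arbitrary: l)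
  case (Suc s)
  have "hv j b (Suc l) s = hv j b' (Suc l) s" by (rule Suc.IH) (use Suc.prems in auto)
  moreover have "b l = b' l" using Suc.prems by auto
  ultimately show ?case by simp
qed simp

lemma hv_lt: "(\<forall>m. l \<le> m \<and> m < l + s \<longrightarrow> b m < j) \<Longrightarrow> hv j b l s < j ^ s"
proof (induction s arbitrary: l)
  case 0 then show ?case by simp
next
  case (Suc s)
  have X: "hv j b (Suc l) s < j ^ s" by (rule Suc.IH) (use Suc.prems in auto)
  have bl: "b l < j" using Suc.prems by auto
  have "b l + j * hv j b (Suc l) s < j + j * hv j b (Suc l) s" using bl by simp
  also have "\<dots> = j * (hv j b (Suc l) s + 1)" by simp
  also have "\<dots> \<le> j * j ^ s" using X by (intro mult_le_mono2) simp
  finally show ?case by simp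
qed

lemma hv_inj: "(\<forall>m. l \<le> m \<and> m < l + s \<longrightarrow> b m < j \<and> b' m < j) \<Longrightarrow> hv j b l s = hv j b' l s
   \<Longrightarrow> (\<forall>m. l \<le> m \<and> m < l + s \<longrightarrow> b m = b' m)"
proof (induction s arbitrary: l)
  case 0 then show ?case by simp
next
  case (Suc s)
  have bl: "b l < j" "b' l < j" using Suc.prems(1) by auto
  have eq: "b l + j * hv j b (Suc l) s = b' l + j * hv j b' (Suc l) s" using Suc.prems(2) by simp
  then have "(b l + j * hv j b (Suc l) s) mod j = (b' l + j * hv j b' (Suc l) s) mod j" by simp
  then have e1: "b l = b' l" using bl by simp
  with eq have "j * hv j b (Suc l) s = j * hv j b' (Suc l) s" by simp
  moreover have "j > 0" using bl by simp
  ultimately have "hv j b (Suc l) s = hv j b' (Suc l) s" by simp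
  then have "\<forall>m. Suc l \<le> m \<and> m < Suc l + s \<longrightarrow> b m = b' m"
    by (intro Suc.IH) (use Suc.prems(1) in auto)
  with e1 show ?case by (metis Suc_leI add_Suc_shift le_neq_implies_less)
qed

lemma hv_digits: "hv k (\<lambda>m. y div k ^ m mod k) l s = y div k ^ l mod k ^ s"
proof (induction s arbitrary: l)
  case 0 then show ?case by simp
next
  case (Suc s)
  have "hv k (\<lambda>m. y div k ^ m mod k) l (Suc s) = y div k ^ l mod k + k * (y div k ^ Suc l mod k ^ s)"
    using Suc.IH by simp
  also have "y div k ^ Suc l = y div k ^ l div k" by (metis div_mult2_eq power_Suc2)
  also have "y div k ^ l mod k + k * (y div k ^ l div k mod k ^ s) = y div k ^ l mod (k * k ^ s)"
    by (simp add: mod_mult2_eq)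
  finally show ?case by simp
qed

fun phiH :: "rf \<Rightarrow> nat \<Rightarrow> nat \<Rightarrow> nat \<Rightarrow> nat \<Rightarrow> nat \<Rightarrow> rf" where
  "phiH \<Phi> k N j l 0 = Zero"
| "phiH \<Phi> k N j l (Suc s) = Comp addp [sbs (Gp (\<lambda>y. y div k ^ l mod k) N) \<Phi>,
      Comp mulp [constp j, phiH \<Phi> k N j (Suc l) s]]"

lemma ev_phiH:
  assumes AN: "\<And>x. A x < N" and Bf: "\<And>l x. eval (\<lambda>x. A x div k ^ l mod k) \<Phi> [x] (Bf l x)"
  shows "eval A (phiH \<Phi> k N j l s) [x] (hv j (\<lambda>l. Bf l x) l s)"
proof (induction s arbitrary: l)
  case 0 then show ?case by (simp add: ev_zero)
next
  case (Suc s)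
  have G: "eval A (Gp (\<lambda>y. y div k ^ l mod k) N) (x # xs) (A x div k ^ l mod k)" for x xs
    by (rule eval_eq, rule ev_Gp, simp add: AN)
  show ?case
    apply (simp only: phiH.simps hv.simps)
    apply (rule comp2[OF ev_sbs[OF G Bf]])
     apply (rule comp2[OF ev_const Suc.IH])
     apply (rule ev_mul)
    apply (rule eval_eq, rule ev_add, simp)
    done
qed

theorem lemma3p5:
  fixes n j k s :: nat
  assumes "n \<ge> 1" and "j \<ge> 1" and "k \<ge> 1" and "s \<ge> 1"
    and "sW_le (RT n k) (RT n j)"
  shows "sW_le (RT n (k ^ s)) (RT n (j ^ s))"
proof -
  obtain \<Phi> \<Psi> where H: "\<And>A. RT_inst n k A \<Longrightarrow> \<exists>B. computes \<Phi> A B \<and> RT_inst n j B \<and>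
        (\<forall>T. RT_sol n B T \<longrightarrow> (\<exists>C. computes \<Psi> T C \<and> RT_sol n A C))"
    using assms(5) unfolding sW_le_def RT_def by auto
  have main: "\<forall>A. RT_inst n (k^s) A \<longrightarrow> (\<exists>B. computes (phiH \<Phi> k (k^s) j 0 s) A B \<and> RT_inst n (j^s) B \<and>
        (\<forall>T. RT_sol n B T \<longrightarrow> (\<exists>C. computes \<Psi> T C \<and> RT_sol n A C)))"
  proof (intro allI impI)
    fix A assume A: "RT_inst n (k^s) A"
    have AN: "A x < k^s" for x
    proof (cases "card (set_decode x) = n")
      case True
      moreover have "finite (set_decode x)" by (rule finite_set_decode)
      ultimately have "A (set_encode (set_decode x)) < k^s" using A unfolding RT_inst_def
        by blast
      then show ?thesis by (simp add: set_decode_inverse)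
    next
      case False then have "A x = 0" using A unfolding RT_inst_def by blast
      then show ?thesis using assms(3) by simp
    qed
    define f where "f = (\<lambda>l x. A x div k ^ l mod k)"
    have fi: "RT_inst n k (f l)" for l
      using A assms(3) unfolding RT_inst_def f_def by auto
    have "\<forall>l. \<exists>B. computes \<Phi> (f l) B \<and> RT_inst n j B \<and>
        (\<forall>T. RT_sol n B T \<longrightarrow> (\<exists>C. computes \<Psi> T C \<and> RT_sol n (f l) C))"
      using H fi by blast
    then obtain Bf where Bf: "\<And>l. computes \<Phi> (f l) (Bf l) \<and> RT_inst n j (Bf l) \<and>
        (\<forall>T. RT_sol n (Bf l) T \<longrightarrow> (\<exists>C. computes \<Psi> T C \<and> RT_sol n (f l) C))"
      by metis
    define Bs where "Bs = (\<lambda>x. hv j (\<lambda>l. Bf l x) 0 s)"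
    have c1: "computes (phiH \<Phi> k (k^s) j 0 s) A Bs"
      unfolding computes_def Bs_def
    proof
      fix x
      show "eval A (phiH \<Phi> k (k ^ s) j 0 s) [x] (hv j (\<lambda>l. Bf l x) 0 s)"
        by (rule ev_phiH[OF AN]) (use Bf in \<open>auto simp: computes_def f_def\<close>)
    qed
    have Bfl: "Bf l (set_encode F) < j" if "finite F" "card F = n" for l F
      using Bf[of l] that unfolding RT_inst_def by blast
    have Bf0: "Bf l m = 0" if "card (set_decode m) \<noteq> n" for l m
      using Bf[of l] that unfolding RT_inst_def by blast
    have c2: "RT_inst n (j^s) Bs"
      unfolding RT_inst_def
    proof (intro conjI allI impI)
      fix F :: "nat set" assume "finite F \<and> card F = n"
      then show "Bs (set_encode F) < j ^ s" unfolding Bs_def by (intro hv_lt) (auto intro: Bfl)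
    next
      fix m assume "card (set_decode m) \<noteq> n"
      then have "Bs m = hv j (\<lambda>l. 0) 0 s" unfolding Bs_def by (intro hv_cong) (auto intro: Bf0)
      also have "\<dots> = 0" by (rule hv_zero)
      finally show "Bs m = 0" .
    qed
    have c3: "\<exists>C. computes \<Psi> T C \<and> RT_sol n A C" if T: "RT_sol n Bs T" for T
    proof -
      have T1: "\<forall>x. T x \<le> 1" and T2: "infinite (char_set T)" using T unfolding RT_sol_def by simp_all
      from T obtain i where Ti0: "\<forall>F. F \<subseteq> char_set T \<and> finite F \<and> card F = n \<longrightarrow> Bs (set_encode F) = i"
        unfolding RT_sol_def by (elim conjE exE)
      have Ti: "Bs (set_encode F) = i" if "F \<subseteq> char_set T" "finite F" "card F = n" for F
        using Ti0 that by blast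
      obtain F0 where F0: "F0 \<subseteq> char_set T" "finite F0" "card F0 = n"
        using infinite_arbitrarily_large[OF T2] by blast
      have solT: "RT_sol n (Bf l) T" if "l < s" for l
        unfolding RT_sol_def
      proof (intro conjI)
        show "\<forall>x. T x \<le> 1" by (rule T1)
        show "infinite (char_set T)" by (rule T2)
        show "\<exists>i. \<forall>F. F \<subseteq> char_set T \<and> finite F \<and> card F = n \<longrightarrow> Bf l (set_encode F) = i"
        proof (intro exI allI impI)
        fix F :: "nat set" assume F: "F \<subseteq> char_set T \<and> finite F \<and> card F = n"
        have "Bs (set_encode F) = Bs (set_encode F0)" using Ti[of F] Ti[OF F0] F by simp
        then have "hv j (\<lambda>l. Bf l (set_encode F)) 0 s = hv j (\<lambda>l. Bf l (set_encode F0)) 0 s"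
          unfolding Bs_def .
        then have "\<forall>m. 0 \<le> m \<and> m < 0 + s \<longrightarrow> Bf m (set_encode F) = Bf m (set_encode F0)"
          by (intro hv_inj) (use F F0 Bfl in simp_all)
        then show "Bf l (set_encode F) = Bf l (set_encode F0)" using that by simp
      qed
      qed
      have "\<forall>l. \<exists>C. l < s \<longrightarrow> computes \<Psi> T C \<and> RT_sol n (f l) C"
      proof
        fix l show "\<exists>C. l < s \<longrightarrow> computes \<Psi> T C \<and> RT_sol n (f l) C"
        proof (cases "l < s")
          case True
          have "\<forall>T. RT_sol n (Bf l) T \<longrightarrow> (\<exists>C. computes \<Psi> T C \<and> RT_sol n (f l) C)" using Bf[of l] by (rule conjunct2[OF conjunct2])
          then show ?thesis using solT[OF True] by blast
        qed simp
      qed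
      from choice[OF this] obtain C where C0: "\<forall>l. l < s \<longrightarrow> computes \<Psi> T (C l) \<and> RT_sol n (f l) (C l)"
        by blast
      have C: "computes \<Psi> T (C l) \<and> RT_sol n (f l) (C l)" if "l < s" for l using C0 that by blast
      have s0: "0 < s" using assms(4) by simp
      have CC: "C l = C 0" if "l < s" for l
        using computes_det[OF conjunct1[OF C[OF that]] conjunct1[OF C[OF s0]]] .
      have solf: "RT_sol n (f l) (C 0)" if "l < s" for l
        using C[OF that] CC[OF that] by simp
      have "\<forall>l. \<exists>c. l < s \<longrightarrow> (\<forall>F. F \<subseteq> char_set (C 0) \<and> finite F \<and> card F = n \<longrightarrow> f l (set_encode F) = c)"
        using solf unfolding RT_sol_def by metis
      from choice[OF this] obtain c where c0: "\<forall>l. l < s \<longrightarrow> (\<forall>F. F \<subseteq> char_set (C 0) \<and> finite F \<and> card F = n \<longrightarrow> f l (set_encode F) = c l)"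
        by blast
      have c: "f l (set_encode F) = c l" if "l < s" "F \<subseteq> char_set (C 0)" "finite F" "card F = n" for l F
        using c0 that by blast
      have "RT_sol n A (C 0)"
        unfolding RT_sol_def
      proof (intro conjI)
        show "\<forall>x. C 0 x \<le> 1" "infinite (char_set (C 0))" using solf[OF s0] unfolding RT_sol_def by blast+
        show "\<exists>i. \<forall>F. F \<subseteq> char_set (C 0) \<and> finite F \<and> card F = n \<longrightarrow> A (set_encode F) = i"
        proof (intro exI allI impI)
        fix F :: "nat set" assume F: "F \<subseteq> char_set (C 0) \<and> finite F \<and> card F = n"
        have "A (set_encode F) = A (set_encode F) mod k ^ s" using AN by simp
        also have "\<dots> = hv k (\<lambda>m. A (set_encode F) div k ^ m mod k) 0 s"
          using hv_digits[of k "A (set_encode F)" 0 s] by simp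
        also have "\<dots> = hv k c 0 s"
          by (intro hv_cong) (use F c in \<open>auto simp: f_def\<close>)
        finally show "A (set_encode F) = hv k c 0 s" .
      qed
      qed
      then show ?thesis using C[OF s0] by blast
    qed
    show "\<exists>B. computes (phiH \<Phi> k (k^s) j 0 s) A B \<and> RT_inst n (j^s) B \<and>
        (\<forall>T. RT_sol n B T \<longrightarrow> (\<exists>C. computes \<Psi> T C \<and> RT_sol n A C))"
      using c1 c2 c3 by blast
  qed
  show ?thesis unfolding sW_le_def RT_def fst_conv snd_conv
    using main by blast
qed

end
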